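(* Let $n\geq 3$ be odd, $m>1$ be odd, and let $G$ be a non-regular bipartite graph of order $m$ with a bipartition $\{A,B\}$ such that all vertices of $A$ have the same degree and all vertices of $B$ have the same degree. Then $\chi_{ld}(G[\overline{K_{n}}])=2$.
   Context: All graphs are finite, simple and undirected, without isolated vertices. For a graph $G=(V,E)$ of order $N$ without isolated vertices, a bijection $f\colon V\to\{1,2,\dots,N\}$ is a local distance antimagic labeling if $w(u)\neq w(v)$ for every edge $uv$, where $w(u)=\sum_{x\in N(u)}f(x)$ and $N(u)$ is the open neighborhood of $u$. $\chi_{ld}(G)$ is the minimum number of distinct weights over all local distance antimagic labelings of $G$. $\overline{K_n}$ is the edgeless graph on $n$ vertices. The lexicographic product $G[H]$ has vertex set $V(G)\times V(H)$, with $(g,h)$ adjacent to $(g',h')$ iff $gg'\in E(G)$, or $g=g'$ and $hh'\in E(H)$. *)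

theory Defs
  imports Main
begin

definition simple_graph :: "'a set \<Rightarrow> ('a \<Rightarrow> 'a \<Rightarrow> bool) \<Rightarrow> bool" where
  "simple_graph V E \<longleftrightarrow> finite V \<and> (\<forall>x y. E x y \<longrightarrow> x \<in> V \<and> y \<in> V)
     \<and> (\<forall>x y. E x y \<longrightarrow> E y x) \<and> (\<forall>x. \<not> E x x)"

definition no_isolated :: "'a set \<Rightarrow> ('a \<Rightarrow> 'a \<Rightarrow> bool) \<Rightarrow> bool" where
  "no_isolated V E \<longleftrightarrow> (\<forall>v\<in>V. \<exists>u\<in>V. E v u)"

definition nbhd :: "'a set \<Rightarrow> ('a \<Rightarrow> 'a \<Rightarrow> bool) \<Rightarrow> 'a \<Rightarrow> 'a set" where
  "nbhd V E v = {u \<in> V. E v u}"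

definition deg :: "'a set \<Rightarrow> ('a \<Rightarrow> 'a \<Rightarrow> bool) \<Rightarrow> 'a \<Rightarrow> nat" where
  "deg V E v = card (nbhd V E v)"

definition regular :: "'a set \<Rightarrow> ('a \<Rightarrow> 'a \<Rightarrow> bool) \<Rightarrow> bool" where
  "regular V E \<longleftrightarrow> (\<forall>u\<in>V. \<forall>v\<in>V. deg V E u = deg V E v)"

definition bipartition :: "'a set \<Rightarrow> ('a \<Rightarrow> 'a \<Rightarrow> bool) \<Rightarrow> 'a set \<Rightarrow> 'a set \<Rightarrow> bool" where
  "bipartition V E A B \<longleftrightarrow> A \<union> B = V \<and> A \<inter> B = {}
     \<and> (\<forall>x y. E x y \<longrightarrow> (x \<in> A \<and> y \<in> B) \<or> (x \<in> B \<and> y \<in> A))"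

definition weight :: "'a set \<Rightarrow> ('a \<Rightarrow> 'a \<Rightarrow> bool) \<Rightarrow> ('a \<Rightarrow> nat) \<Rightarrow> 'a \<Rightarrow> nat" where
  "weight V E f u = (\<Sum>x\<in>nbhd V E u. f x)"

definition ld_antimagic :: "'a set \<Rightarrow> ('a \<Rightarrow> 'a \<Rightarrow> bool) \<Rightarrow> ('a \<Rightarrow> nat) \<Rightarrow> bool" where
  "ld_antimagic V E f \<longleftrightarrow> bij_betw f V {1..card V}
     \<and> (\<forall>u v. E u v \<longrightarrow> weight V E f u \<noteq> weight V E f v)"

definition chi_ld :: "'a set \<Rightarrow> ('a \<Rightarrow> 'a \<Rightarrow> bool) \<Rightarrow> nat" where
  "chi_ld V E = Min {card (weight V E f ` V) | f. ld_antimagic V E f}"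

definition lex_verts :: "'a set \<Rightarrow> 'b set \<Rightarrow> ('a \<times> 'b) set" where
  "lex_verts V W = V \<times> W"

definition lex_adj :: "('a \<Rightarrow> 'a \<Rightarrow> bool) \<Rightarrow> ('b \<Rightarrow> 'b \<Rightarrow> bool) \<Rightarrow> 'a \<times> 'b \<Rightarrow> 'a \<times> 'b \<Rightarrow> bool" where
  "lex_adj E F p q \<longleftrightarrow> E (fst p) (fst q) \<or> (fst p = fst q \<and> F (snd p) (snd q))"

definition empty_verts :: "nat \<Rightarrow> nat set" where "empty_verts n = {0..<n}"
definition empty_adj :: "nat \<Rightarrow> nat \<Rightarrow> bool" where "empty_adj x y = False"

end

theory Submission
  imports Defs
begin

definition sg :: "nat \<Rightarrow> nat \<Rightarrow> nat \<Rightarrow> nat" where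
  "sg k i j = (if i = 0 then j
     else if i = 1 then (if j \<le> k then j + k else j - k - 1)
     else if i = 2 then (if j \<le> k then 2*k - 2*j else 4*k+1-2*j)
     else if even i then 2*k - j else j)"

lemma sg_lt: "j < 2*k+1 \<Longrightarrow> sg k i j < 2*k+1"
  by (auto simp: sg_def)

lemma sg_inj: "j < 2*k+1 \<Longrightarrow> j' < 2*k+1 \<Longrightarrow> sg k i j = sg k i j' \<Longrightarrow> j = j'"
  unfolding sg_def by (auto split: if_splits; presburger)

lemma sg_sum: "j < 2*k+1 \<Longrightarrow> (\<Sum>i<3+2*p. sg k i j) = 3*k + 2*k*p"
proof (induction p)
  case 0
  then show ?case by (simp add: numeral_3_eq_3 lessThan_Suc sg_def)
next
  case (Suc p)
  have e: "3 + 2 * Suc p = Suc (Suc (3 + 2*p))" by simp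
  have "sg k (3+2*p) j + sg k (Suc (3+2*p)) j = 2*k" using Suc.prems by (simp add: sg_def)
  then show ?case unfolding e using Suc by (simp only: sum.lessThan_Suc) simp
qed

lemma lt_bound: "(i::nat) < n \<Longrightarrow> s < m \<Longrightarrow> i*m + s + 1 \<le> m*n"
proof -
  assume a: "i < n" "s < m"
  have "i*m + s + 1 \<le> i*m + m" using a by simp
  also have "\<dots> = (i+1)*m" by simp
  also have "\<dots> \<le> n*m" using a by (intro mult_right_mono) auto
  finally show ?thesis by (simp add: mult.commute)
qed

lemma labeling_exists:
  fixes V :: "'a set"
  assumes "finite V" "card V = 2*k+1"
  shows "\<exists>f C. bij_betw f (V \<times> {0..<3+2*p}) {1..(2*k+1)*(3+2*p)} \<and> C > (0::nat)
     \<and> (\<forall>v\<in>V. (\<Sum>i<3+2*p. f (v,i)) = C)"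
proof -
  obtain g where g: "bij_betw g V {0..<2*k+1}"
    using ex_bij_betw_finite_nat[OF assms(1)] assms(2) by auto
  define m where "m = 2*k+1"
  define n where "n = 3+2*(p::nat)"
  define f where "f = (\<lambda>(v,i). i*m + sg k i (g v) + 1)"
  define D where "D = V \<times> {0..<n}"
  have gm: "v \<in> V \<Longrightarrow> g v < m" for v using g unfolding bij_betw_def m_def by auto
  have inj: "inj_on f D"
  proof (rule inj_onI)
    fix x y assume x: "x \<in> D" and y: "y \<in> D" and fxy: "f x = f y"
    obtain v i where xv: "x = (v,i)" by force
    obtain w j where yw: "y = (w,j)" by force
    have v: "v \<in> V" and w: "w \<in> V" using x y xv yw D_def by auto
    have s1: "sg k i (g v) < m" using sg_lt gm[OF v] m_def by auto
    have s2: "sg k j (g w) < m" using sg_lt gm[OF w] m_def by auto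
    have eq: "i*m + sg k i (g v) = j*m + sg k j (g w)" using fxy xv yw f_def by simp
    have "(i*m + sg k i (g v)) div m = i" using s1 by simp
    moreover have "(j*m + sg k j (g w)) div m = j" using s2 by simp
    ultimately have ij: "i = j" using eq by metis
    have "sg k i (g v) = sg k i (g w)" using eq ij by simp
    then have "g v = g w" using sg_inj gm[OF v] gm[OF w] m_def by blast
    then have "v = w" using g v w unfolding bij_betw_def inj_on_def by blast
    then show "x = y" using xv yw ij by simp
  qed
  have img: "f ` D \<subseteq> {1..m*n}"
  proof
    fix y assume "y \<in> f ` D"
    then obtain v i where vi: "v \<in> V" "i < n" "y = f (v,i)" unfolding D_def by auto
    have "sg k i (g v) < m" using sg_lt gm[OF vi(1)] m_def by auto
    then show "y \<in> {1..m*n}" using lt_bound[OF vi(2)] vi(3) f_def by auto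
  qed
  have cD: "card D = m*n" using assms D_def m_def by (simp add: card_cartesian_product)
  have "card (f ` D) = card {1..m*n}" using card_image[OF inj] cD by simp
  then have "f ` D = {1..m*n}" using img by (intro card_subset_eq) auto
  then have bij: "bij_betw f D {1..m*n}" using inj by (simp add: bij_betw_def)
  define C where "C = (\<Sum>i<n. i*m + 1) + (3*k + 2*k*p)"
  have sums: "(\<Sum>i<n. f (v,i)) = C" if v: "v \<in> V" for v
  proof -
    have "(\<Sum>i<n. f (v,i)) = (\<Sum>i<n. (i*m + 1) + sg k i (g v))"
      unfolding f_def by (intro sum.cong) auto
    also have "\<dots> = (\<Sum>i<n. i*m + 1) + (\<Sum>i<n. sg k i (g v))" by (rule sum.distrib)
    also have "(\<Sum>i<n. sg k i (g v)) = 3*k + 2*k*p"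
      unfolding n_def using sg_sum gm[OF v] m_def by blast
    finally show ?thesis unfolding C_def .
  qed
  have "0 < (\<Sum>i<n. i*m + 1)" by (intro sum_pos) (auto simp: n_def lessThan_empty_iff)
  then have "C > 0" unfolding C_def by simp
  then show ?thesis using bij sums unfolding D_def m_def n_def by blast
qed

lemma lex_nbhd:
  "nbhd (lex_verts V (empty_verts n)) (lex_adj E empty_adj) (v,i) = nbhd V E v \<times> {0..<n}"
  unfolding nbhd_def lex_verts_def lex_adj_def empty_adj_def empty_verts_def by auto

theorem mainTheorem18:
  fixes V :: "'a set" and E :: "'a \<Rightarrow> 'a \<Rightarrow> bool" and A B :: "'a set" and n m :: nat
  assumes "simple_graph V E" and "no_isolated V E"
    and "odd n" and "n \<ge> 3"
    and "card V = m" and "odd m" and "m > 1"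
    and "\<not> regular V E"
    and "bipartition V E A B"
    and "\<forall>u\<in>A. \<forall>v\<in>A. deg V E u = deg V E v"
    and "\<forall>u\<in>B. \<forall>v\<in>B. deg V E u = deg V E v"
  shows "chi_ld (lex_verts V (empty_verts n)) (lex_adj E empty_adj) = 2"
proof -
  define V' where "V' = lex_verts V (empty_verts n)"
  define E' where "E' = lex_adj E empty_adj"
  have finV: "finite V" using assms(1) simple_graph_def by auto
  have EV: "E x y \<Longrightarrow> x \<in> V \<and> y \<in> V" for x y using assms(1) unfolding simple_graph_def by blast
  have V'eq: "V' = V \<times> {0..<n}" unfolding V'_def lex_verts_def empty_verts_def by simp
  have finV': "finite V'" using finV V'eq by simp
  obtain k where k: "m = 2*k+1" using assms(6) oddE by blast
  define p where "p = (n - 3) div 2"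
  have p: "n = 3+2*p" unfolding p_def using assms(3,4) by presburger
  obtain x y where xy: "E x y" "x \<in> V" "y \<in> V"
  proof -
    have "V \<noteq> {}" using assms(5,7) by auto
    then obtain x where "x \<in> V" by auto
    then obtain u where "u \<in> V" "E x u" using assms(2) unfolding no_isolated_def by blast
    then show ?thesis using that \<open>x \<in> V\<close> by blast
  qed
  have bp: "A \<union> B = V" "(x \<in> A \<and> y \<in> B) \<or> (x \<in> B \<and> y \<in> A)"
    using assms(9) xy unfolding bipartition_def by blast+
  have dA: "deg V E u = deg V E v" if "u \<in> A" "v \<in> A" for u v using assms(10) that by blast
  have dB: "deg V E u = deg V E v" if "u \<in> B" "v \<in> B" for u v using assms(11) that by blast
  have degs: "deg V E u = deg V E x \<or> deg V E u = deg V E y" if "u \<in> V" for u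
  proof -
    have "u \<in> A \<or> u \<in> B" using bp that by blast
    then show ?thesis using bp(2) dA dB by blast
  qed
  have degne: "deg V E u \<noteq> deg V E w" if "E u w" for u w
  proof
    assume eq: "deg V E u = deg V E w"
    have "u \<in> V" "w \<in> V" using EV that by auto
    have "\<forall>z\<in>V. deg V E z = deg V E u"
    proof
      fix z assume "z \<in> V"
      have "(u \<in> A \<and> w \<in> B) \<or> (u \<in> B \<and> w \<in> A)" using assms(9) that unfolding bipartition_def by blast
      moreover have "z \<in> A \<or> z \<in> B" using bp \<open>z \<in> V\<close> by blast
      ultimately show "deg V E z = deg V E u" using dA dB eq by metis
    qed
    then have "\<forall>a\<in>V. \<forall>b\<in>V. deg V E a = deg V E b" by metis
    then show False using assms(8) unfolding regular_def by blast
  qed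
  obtain f C where f: "bij_betw f (V \<times> {0..<3+2*p}) {1..(2*k+1)*(3+2*p)}" "C > (0::nat)"
     "\<forall>v\<in>V. (\<Sum>i<3+2*p. f (v,i)) = C"
    using labeling_exists[OF finV, of k p] assms(5) k by blast
  have cV': "card V' = m*n" using V'eq assms(5) finV by (simp add: card_cartesian_product)
  have wt: "weight V' E' f (v,i) = deg V E v * C" if "v \<in> V" for v i
  proof -
    have "weight V' E' f (v,i) = (\<Sum>q\<in>nbhd V E v \<times> {0..<n}. f q)"
      unfolding weight_def V'_def E'_def lex_nbhd ..
    also have "\<dots> = (\<Sum>w\<in>nbhd V E v. \<Sum>j\<in>{0..<n}. f (w,j))"
      by (rule sum.cartesian_product')
    also have "\<dots> = (\<Sum>w\<in>nbhd V E v. C)"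
      using f(3) p by (intro sum.cong) (auto simp: nbhd_def lessThan_atLeast0)
    also have "\<dots> = deg V E v * C" by (simp add: deg_def)
    finally show ?thesis .
  qed
  have adjE: "E' a b \<Longrightarrow> E (fst a) (fst b)" for a b
    unfolding E'_def lex_adj_def empty_adj_def by auto
  have ld: "ld_antimagic V' E' f"
    unfolding ld_antimagic_def
  proof
    show "bij_betw f V' {1..card V'}" using f(1) V'eq cV' k p by (simp add: mult.commute)
    show "\<forall>u v. E' u v \<longrightarrow> weight V' E' f u \<noteq> weight V' E' f v"
    proof (intro allI impI)
      fix a b assume ab: "E' a b"
      obtain u i where a: "a = (u,i)" by force
      obtain w j where b: "b = (w,j)" by force
      have "E u w" using adjE[OF ab] a b by simp
      then have "u \<in> V" "w \<in> V" "deg V E u \<noteq> deg V E w" using EV degne by auto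
      then show "weight V' E' f a \<noteq> weight V' E' f b" using wt a b f(2) by simp
    qed
  qed
  have img: "weight V' E' f ` V' \<subseteq> {deg V E x * C, deg V E y * C}"
  proof
    fix z assume "z \<in> weight V' E' f ` V'"
    then obtain v i where vi: "v \<in> V" "z = weight V' E' f (v,i)" using V'eq by auto
    then have "z = deg V E v * C" using wt by simp
    then show "z \<in> {deg V E x * C, deg V E y * C}" using degs[OF vi(1)] by auto
  qed
  have le2: "card (weight V' E' f ` V') \<le> 2"
  proof -
    have "card {deg V E x * C, deg V E y * C} \<le> 2"
      by (cases "deg V E x * C = deg V E y * C") auto
    then show ?thesis using card_mono[OF _ img] by simp
  qed
  have ge2: "card (weight V' E' g ` V') \<ge> 2" if g: "ld_antimagic V' E' g" for g
  proof -
    have adj: "E' (x,0) (y,0)" unfolding E'_def lex_adj_def using xy by simp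
    have in': "(x,0) \<in> V'" "(y,0) \<in> V'" using xy V'eq assms(4) by auto
    have ne: "weight V' E' g (x,0) \<noteq> weight V' E' g (y,0)" using g adj unfolding ld_antimagic_def by blast
    have "{weight V' E' g (x,0), weight V' E' g (y,0)} \<subseteq> weight V' E' g ` V'" using in' by auto
    from card_mono[OF finite_imageI[OF finV'] this] ne show ?thesis by simp
  qed
  define S where "S = {card (weight V' E' g ` V') | g. ld_antimagic V' E' g}"
  have "S \<subseteq> {..card V'}" unfolding S_def using card_image_le[OF finV'] by auto
  then have finS: "finite S" using finite_subset by blast
  have "card (weight V' E' f ` V') \<in> S" unfolding S_def using ld by blast
  moreover have "card (weight V' E' f ` V') = 2" using le2 ge2[OF ld] by simp
  ultimately have "2 \<in> S" by simp
  moreover have "\<forall>s\<in>S. 2 \<le> s" unfolding S_def using ge2 by blast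
  ultimately have "Min S = 2" using finS by (intro Min_eqI) auto
  then show ?thesis unfolding chi_ld_def S_def V'_def E'_def .
qed

end
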